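(* Consider an instance of the robust flow design problem on a directed graph $D=(V,A)$ with source $s$, sink $t$, capacities $u\in\mathbb{R}_+^A$, protection cost coefficients $\gamma\in\mathbb{R}_+^A$, flow player budget $B_F>0$ and interdictor budget $B_I\ge0$. Let $x$ be an optimal solution of the linear program $[\mathrm{LP}_{\mathrm{design}}]$: maximize $\sum_{P\in\mathcal{P}}\big(1-\frac{B_I}{B_F}\sum_{e\in P}\gamma_e\big)x_P$ subject to $\sum_{P\in\mathcal{P}:e\in P}x_P\le u_e$ for all $e\in A$ and $x_P\ge0$ for all $P\in\mathcal{P}$. Then $x$ is an optimal flow for the flow player in the design problem, i.e. there exist interdiction costs $c$ such that $(x,c)$ is an optimal solution of the design problem.
   Context: $\mathcal{P}$ is the set of $s$-$t$-paths in $D$ and $X=\{x\in\mathbb{R}_+^{\mathcal{P}}:\sum_{P\ni e}x_P\le u_e\ \forall e\in A\}$. In the design problem the flow player chooses $x\in X$ and interdiction costs $c\in\mathbb{R}_+^A$ subject to $\sum_{e\in A}\gamma_e c_e\sum_{P\in\mathcal{P}:e\in P}x_P\le B_F$; for arcs with $\gamma_e=0$ one has $c_e=\infty$ (flow cannot be stolen there). The interdictor then chooses $z\in\mathbb{R}_+^{A\times\mathcal{P}}$ with $\sum_{e\in A}c_e\sum_{P\ni e}z_{e,P}\le B_I$ (and $z_{e,P}=0$ if $c_e=\infty$), and the value is $\mathrm{val}(x,z)=\sum_{P\in\mathcal{P}}(x_P-\sum_{e\in P}z_{e,P})^+$. An optimal solution is a feasible pair $(x,c)$ maximizing $\min_z\mathrm{val}(x,z)$.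 *)

theory Defs
  imports Main "HOL-Library.Extended_Real"
begin

definition is_st_path ::
  "'e set \<Rightarrow> ('e \<Rightarrow> 'v) \<Rightarrow> ('e \<Rightarrow> 'v) \<Rightarrow> 'v \<Rightarrow> 'v \<Rightarrow> 'e list \<Rightarrow> bool" where
  "is_st_path A tail head s t P \<longleftrightarrow>
     P \<noteq> [] \<and> set P \<subseteq> A \<and> tail (P ! 0) = s \<and> head (last P) = t \<and>
     (\<forall>i. Suc i < length P \<longrightarrow> head (P ! i) = tail (P ! Suc i)) \<and>
     distinct (s # map head P)"

definition st_paths :: "'e set \<Rightarrow> ('e \<Rightarrow> 'v) \<Rightarrow> ('e \<Rightarrow> 'v) \<Rightarrow> 'v \<Rightarrow> 'v \<Rightarrow> 'e list set" where
  "st_paths A tail head s t = {P. is_st_path A tail head s t P}"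

definition arc_flow :: "'e list set \<Rightarrow> ('e list \<Rightarrow> real) \<Rightarrow> 'e \<Rightarrow> real" where
  "arc_flow \<P> x e = (\<Sum>P\<in>{P\<in>\<P>. e \<in> set P}. x P)"

definition feasible_flow :: "'e set \<Rightarrow> 'e list set \<Rightarrow> ('e \<Rightarrow> real) \<Rightarrow> ('e list \<Rightarrow> real) \<Rightarrow> bool" where
  "feasible_flow A \<P> u x \<longleftrightarrow> (\<forall>P\<in>\<P>. 0 \<le> x P) \<and> (\<forall>e\<in>A. arc_flow \<P> x e \<le> u e)"

definition lp_design_obj ::
  "'e list set \<Rightarrow> ('e \<Rightarrow> real) \<Rightarrow> real \<Rightarrow> real \<Rightarrow> ('e list \<Rightarrow> real) \<Rightarrow> real" where
  "lp_design_obj \<P> \<gamma> BF BI x = (\<Sum>P\<in>\<P>. (1 - BI / BF * (\<Sum>e\<in>set P. \<gamma> e)) * x P)"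

definition lp_design_optimal ::
  "'e set \<Rightarrow> 'e list set \<Rightarrow> ('e \<Rightarrow> real) \<Rightarrow> ('e \<Rightarrow> real) \<Rightarrow> real \<Rightarrow> real \<Rightarrow> ('e list \<Rightarrow> real) \<Rightarrow> bool" where
  "lp_design_optimal A \<P> u \<gamma> BF BI x \<longleftrightarrow> feasible_flow A \<P> u x \<and>
     (\<forall>x'. feasible_flow A \<P> u x' \<longrightarrow> lp_design_obj \<P> \<gamma> BF BI x' \<le> lp_design_obj \<P> \<gamma> BF BI x)"

text \<open>Interdiction costs take values in [0,\<infinity>]; arcs with \<gamma>_e = 0 must have cost \<infinity>.
  Products follow the usual convention 0 \<cdot> \<infinity> = 0 (as for ereal multiplication).\<close>
definition feasible_design ::
  "'e set \<Rightarrow> 'e list set \<Rightarrow> ('e \<Rightarrow> real) \<Rightarrow> ('e \<Rightarrow> real) \<Rightarrow> real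
     \<Rightarrow> ('e list \<Rightarrow> real) \<Rightarrow> ('e \<Rightarrow> ereal) \<Rightarrow> bool" where
  "feasible_design A \<P> u \<gamma> BF x c \<longleftrightarrow> feasible_flow A \<P> u x \<and>
     (\<forall>e\<in>A. 0 \<le> c e) \<and> (\<forall>e\<in>A. \<gamma> e = 0 \<longrightarrow> c e = \<infinity>) \<and>
     (\<forall>e\<in>A. \<gamma> e \<noteq> 0 \<longrightarrow> c e \<noteq> \<infinity>) \<and>
     (\<Sum>e\<in>A. ereal (\<gamma> e) * c e * ereal (arc_flow \<P> x e)) \<le> ereal BF"

definition feasible_interdiction ::
  "'e set \<Rightarrow> 'e list set \<Rightarrow> real \<Rightarrow> ('e \<Rightarrow> ereal) \<Rightarrow> ('e \<Rightarrow> 'e list \<Rightarrow> real) \<Rightarrow> bool" where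
  "feasible_interdiction A \<P> BI c z \<longleftrightarrow>
     (\<forall>e\<in>A. \<forall>P\<in>\<P>. 0 \<le> z e P) \<and>
     (\<forall>e\<in>A. \<forall>P\<in>\<P>. c e = \<infinity> \<longrightarrow> z e P = 0) \<and>
     (\<Sum>e\<in>A. c e * ereal (\<Sum>P\<in>{P\<in>\<P>. e \<in> set P}. z e P)) \<le> ereal BI"

definition val :: "'e list set \<Rightarrow> ('e list \<Rightarrow> real) \<Rightarrow> ('e \<Rightarrow> 'e list \<Rightarrow> real) \<Rightarrow> real" where
  "val \<P> x z = (\<Sum>P\<in>\<P>. max 0 (x P - (\<Sum>e\<in>set P. z e P)))"

text \<open>Value of a design (x,c): the minimum over interdictions (taken as infimum).\<close>
definition design_value ::
  "'e set \<Rightarrow> 'e list set \<Rightarrow> real \<Rightarrow> ('e list \<Rightarrow> real) \<Rightarrow> ('e \<Rightarrow> ereal) \<Rightarrow> real" where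
  "design_value A \<P> BI x c = (INF z\<in>{z. feasible_interdiction A \<P> BI c z}. val \<P> x z)"

definition design_optimal ::
  "'e set \<Rightarrow> 'e list set \<Rightarrow> ('e \<Rightarrow> real) \<Rightarrow> ('e \<Rightarrow> real) \<Rightarrow> real \<Rightarrow> real
     \<Rightarrow> ('e list \<Rightarrow> real) \<Rightarrow> ('e \<Rightarrow> ereal) \<Rightarrow> bool" where
  "design_optimal A \<P> u \<gamma> BF BI x c \<longleftrightarrow> feasible_design A \<P> u \<gamma> BF x c \<and>
     (\<forall>x' c'. feasible_design A \<P> u \<gamma> BF x' c' \<longrightarrow>
        design_value A \<P> BI x' c' \<le> design_value A \<P> BI x c)"

end

theory Submission
  imports Defs
begin

lemma paths_finite:
  assumes "finite A" shows "finite (st_paths A tail head s t)"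
proof (rule finite_subset[OF _ finite_subset_distinct[OF assms]])
  show "st_paths A tail head s t \<subseteq> {xs. set xs \<subseteq> A \<and> distinct xs}"
    by (auto simp: st_paths_def is_st_path_def distinct_map)
qed

lemma paths_sub: "P \<in> st_paths A tail head s t \<Longrightarrow> set P \<subseteq> A"
  by (auto simp: st_paths_def is_st_path_def)

lemma swap_sum:
  fixes g :: "'e \<Rightarrow> 'e list \<Rightarrow> real"
  assumes "finite A" "finite Pa" "\<forall>P\<in>Pa. set P \<subseteq> A"
  shows "(\<Sum>P\<in>Pa. \<Sum>e\<in>set P. g e P) = (\<Sum>e\<in>A. \<Sum>P\<in>{P\<in>Pa. e \<in> set P}. g e P)"
proof -
  have "(\<Sum>P\<in>Pa. \<Sum>e\<in>set P. g e P) = (\<Sum>P\<in>Pa. \<Sum>e\<in>{e\<in>A. e \<in> set P}. g e P)"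
  proof (rule sum.cong[OF refl])
    fix P assume "P \<in> Pa"
    hence "set P \<subseteq> A" using assms(3) by blast
    hence "{e\<in>A. e \<in> set P} = set P" by blast
    thus "(\<Sum>e\<in>set P. g e P) = (\<Sum>e\<in>{e\<in>A. e \<in> set P}. g e P)" by simp
  qed
  also have "\<dots> = (\<Sum>e\<in>A. \<Sum>P\<in>{P\<in>Pa. e \<in> set P}. g e P)"
    using sum.swap_restrict[OF assms(2) assms(1), of "\<lambda>P e. g e P" "\<lambda>P e. e \<in> set P"] by simp
  finally show ?thesis .
qed

lemma ereal_mult_fin:
  fixes c :: ereal
  assumes "0 \<le> c" "c = \<infinity> \<Longrightarrow> a = 0"
  shows "c * ereal a = ereal (real_of_ereal c * a)"
  using assms by (cases c) auto

lemma ereal_mult_fin2: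
  fixes c :: ereal
  assumes "0 \<le> c" "c = \<infinity> \<Longrightarrow> g = 0"
  shows "ereal g * c * ereal a = ereal (g * real_of_ereal c * a)"
  using assms by (cases c) auto

lemma upper:
  assumes finA: "finite A" and finP: "finite Pa" and sub: "\<forall>P\<in>Pa. set P \<subseteq> A"
    and gam: "\<forall>e\<in>A. 0 \<le> \<gamma> e" and BF: "BF > 0" and BI: "BI \<ge> 0"
    and fd: "feasible_design A Pa u \<gamma> BF x' c'"
  shows "\<exists>x''. feasible_flow A Pa u x'' \<and> design_value A Pa BI x' c' \<le> lp_design_obj Pa \<gamma> BF BI x''"
proof -
  define z where "z e P = BI/BF * \<gamma> e * x' P" for e P
  define co where "co P = 1 - BI/BF * (\<Sum>e\<in>set P. \<gamma> e)" for P
  define x'' where "x'' P = (if co P > 0 then x' P else 0)" for P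
  note fdd = fd[unfolded feasible_design_def feasible_flow_def]
  have x'nn: "\<forall>P\<in>Pa. 0 \<le> x' P" using fdd by blast
  have cap: "\<forall>e\<in>A. arc_flow Pa x' e \<le> u e" using fdd by blast
  have cnn: "\<forall>e\<in>A. 0 \<le> c' e" using fdd by blast
  have cfin: "\<forall>e\<in>A. \<gamma> e \<noteq> 0 \<longrightarrow> c' e \<noteq> \<infinity>" using fdd by blast
  have bud: "(\<Sum>e\<in>A. ereal (\<gamma> e) * c' e * ereal (arc_flow Pa x' e)) \<le> ereal BF" using fdd by blast
  have ff: "feasible_flow A Pa u x''"
    unfolding feasible_flow_def
  proof (intro conjI ballI)
    fix P assume "P \<in> Pa" thus "0 \<le> x'' P" using x'nn by (simp add: x''_def)
  next
    fix e assume e: "e \<in> A"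
    have "arc_flow Pa x'' e \<le> arc_flow Pa x' e"
      unfolding arc_flow_def using x'nn by (intro sum_mono) (auto simp: x''_def)
    moreover have "arc_flow Pa x' e \<le> u e" using cap e by blast
    ultimately show "arc_flow Pa x'' e \<le> u e" by linarith
  qed
  have budr: "(\<Sum>e\<in>A. \<gamma> e * real_of_ereal (c' e) * arc_flow Pa x' e) \<le> BF"
  proof -
    have "(\<Sum>e\<in>A. ereal (\<gamma> e) * c' e * ereal (arc_flow Pa x' e))
        = (\<Sum>e\<in>A. ereal (\<gamma> e * real_of_ereal (c' e) * arc_flow Pa x' e))"
      using cnn cfin by (intro sum.cong refl ereal_mult_fin2) auto
    thus ?thesis using bud by (simp add: sum_ereal)
  qed
  have zf: "feasible_interdiction A Pa BI c' z"
    unfolding feasible_interdiction_def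
  proof (intro conjI ballI impI)
    fix e P assume "e \<in> A" "P \<in> Pa"
    thus "0 \<le> z e P" using gam x'nn BI BF by (simp add: z_def)
  next
    fix e P assume "e \<in> A" "P \<in> Pa" "c' e = \<infinity>"
    thus "z e P = 0" using cfin by (auto simp: z_def)
  next
    have zs: "(\<Sum>P\<in>{P\<in>Pa. e \<in> set P}. z e P) = BI/BF * \<gamma> e * arc_flow Pa x' e" for e
      by (simp add: z_def arc_flow_def sum_distrib_left)
    have "(\<Sum>e\<in>A. c' e * ereal (\<Sum>P\<in>{P\<in>Pa. e \<in> set P}. z e P))
        = (\<Sum>e\<in>A. ereal (real_of_ereal (c' e) * (BI/BF * \<gamma> e * arc_flow Pa x' e)))"
      unfolding zs using cnn cfin by (intro sum.cong refl ereal_mult_fin) auto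
    also have "\<dots> = ereal (BI/BF * (\<Sum>e\<in>A. \<gamma> e * real_of_ereal (c' e) * arc_flow Pa x' e))"
      by (simp add: sum_ereal sum_distrib_left algebra_simps)
    also have "\<dots> \<le> ereal (BI/BF * BF)"
      using mult_left_mono[OF budr, of "BI/BF"] BI BF by simp
    also have "\<dots> = ereal BI" using BF by simp
    finally show "(\<Sum>e\<in>A. c' e * ereal (\<Sum>P\<in>{P\<in>Pa. e \<in> set P}. z e P)) \<le> ereal BI" .
  qed
  have veq: "val Pa x' z = lp_design_obj Pa \<gamma> BF BI x''"
    unfolding val_def lp_design_obj_def
  proof (intro sum.cong refl)
    fix P assume P: "P \<in> Pa"
    have "(\<Sum>e\<in>set P. z e P) = (\<Sum>e\<in>set P. (BI/BF * x' P) * \<gamma> e)"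
      by (simp add: z_def mult_ac)
    also have "\<dots> = (BI/BF * x' P) * (\<Sum>e\<in>set P. \<gamma> e)"
      by (rule sum_distrib_left[symmetric])
    finally have "(\<Sum>e\<in>set P. z e P) = BI/BF * (\<Sum>e\<in>set P. \<gamma> e) * x' P"
      by (simp add: mult_ac)
    hence "x' P - (\<Sum>e\<in>set P. z e P) = co P * x' P" by (simp add: co_def algebra_simps)
    moreover have "max 0 (co P * x' P) = co P * x'' P"
    proof (cases "co P > 0")
      case True thus ?thesis using x'nn P by (simp add: x''_def)
    next
      case False
      hence "co P * x' P \<le> 0" using x'nn P by (simp add: mult_nonpos_nonneg)
      thus ?thesis using False by (simp add: x''_def)
    qed
    ultimately show "max 0 (x' P - (\<Sum>e\<in>set P. z e P)) = (1 - BI / BF * (\<Sum>e\<in>set P. \<gamma> e)) * x'' P"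
      by (simp add: co_def)
  qed
  have "design_value A Pa BI x' c' \<le> val Pa x' z"
    unfolding design_value_def
  proof (rule cINF_lower)
    show "bdd_below (val Pa x' ` {z. feasible_interdiction A Pa BI c' z})"
      by (rule bdd_belowI2[where m=0]) (simp add: val_def sum_nonneg)
    show "z \<in> {z. feasible_interdiction A Pa BI c' z}" using zf by simp
  qed
  thus ?thesis unfolding veq using ff by blast
qed

theorem theorem2:
  fixes A :: "'e set" and tail head :: "'e \<Rightarrow> 'v" and s t :: 'v
    and u \<gamma> :: "'e \<Rightarrow> real" and BF BI :: real and x :: "'e list \<Rightarrow> real"
  assumes "finite A"
    and "\<forall>e\<in>A. 0 \<le> u e"
    and "\<forall>e\<in>A. 0 \<le> \<gamma> e"
    and "BF > 0" and "BI \<ge> 0"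
    and "lp_design_optimal A (st_paths A tail head s t) u \<gamma> BF BI x"
  shows "\<exists>c. design_optimal A (st_paths A tail head s t) u \<gamma> BF BI x c"
proof -
  define Pa where "Pa = st_paths A tail head s t"
  have finA: "finite A" and gam: "\<forall>e\<in>A. 0 \<le> \<gamma> e" and BF: "BF > 0" and BI: "BI \<ge> 0"
    using assms by auto
  have finP: "finite Pa" using paths_finite[OF finA] by (simp add: Pa_def)
  have sub: "\<forall>P\<in>Pa. set P \<subseteq> A" 
  proof
    fix P assume "P \<in> Pa" thus "set P \<subseteq> A" unfolding Pa_def by (rule paths_sub)
  qed
  have lpo: "lp_design_optimal A Pa u \<gamma> BF BI x" unfolding Pa_def by (rule assms(6))
  hence ffx: "feasible_flow A Pa u x" and xopt: "\<And>x'. feasible_flow A Pa u x' \<Longrightarrow>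
      lp_design_obj Pa \<gamma> BF BI x' \<le> lp_design_obj Pa \<gamma> BF BI x"
    by (auto simp: lp_design_optimal_def)
  have xnn: "\<forall>P\<in>Pa. 0 \<le> x P" using ffx by (simp add: feasible_flow_def)
  define f where "f = arc_flow Pa x"
  have fnn: "\<forall>e. 0 \<le> f e" unfolding f_def arc_flow_def using xnn by (auto intro: sum_nonneg)
  define W where "W = (\<Sum>e\<in>A. \<gamma> e * f e)"
  have Wnn: "W \<ge> 0" unfolding W_def using gam fnn by (auto intro: sum_nonneg)
  define k where "k = (if W = 0 then 1 else BF / W)"
  have kpos: "k > 0" using Wnn BF by (auto simp: k_def)
  have kW: "k * W \<le> BF" using BF by (auto simp: k_def)
  define c where "c e = (if \<gamma> e = 0 then \<infinity> else ereal k)" for e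
  have objx: "lp_design_obj Pa \<gamma> BF BI x = (\<Sum>P\<in>Pa. x P) - BI/BF * W"
  proof -
    have "(\<Sum>P\<in>Pa. (\<Sum>e\<in>set P. \<gamma> e) * x P) = (\<Sum>P\<in>Pa. \<Sum>e\<in>set P. \<gamma> e * x P)"
      by (simp add: sum_distrib_right)
    also have "\<dots> = (\<Sum>e\<in>A. \<Sum>P\<in>{P\<in>Pa. e \<in> set P}. \<gamma> e * x P)"
      by (rule swap_sum[OF finA finP sub])
    also have "\<dots> = W" by (simp add: W_def f_def arc_flow_def sum_distrib_left)
    finally have GW: "(\<Sum>P\<in>Pa. (\<Sum>e\<in>set P. \<gamma> e) * x P) = W" .
    have "lp_design_obj Pa \<gamma> BF BI x = (\<Sum>P\<in>Pa. x P - BI/BF * ((\<Sum>e\<in>set P. \<gamma> e) * x P))"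
      unfolding lp_design_obj_def by (intro sum.cong refl) (simp add: algebra_simps)
    also have "\<dots> = (\<Sum>P\<in>Pa. x P) - (\<Sum>P\<in>Pa. BI/BF * ((\<Sum>e\<in>set P. \<gamma> e) * x P))"
      by (rule sum_subtractf)
    also have "\<dots> = (\<Sum>P\<in>Pa. x P) - BI/BF * W"
      by (simp only: sum_distrib_left[symmetric] GW)
    finally show ?thesis .
  qed
  have fdx: "feasible_design A Pa u \<gamma> BF x c"
    unfolding feasible_design_def
  proof (intro conjI ballI impI)
    show "feasible_flow A Pa u x" by (rule ffx)
    show "\<And>e. e \<in> A \<Longrightarrow> 0 \<le> c e" using kpos by (simp add: c_def)
    show "\<And>e. e \<in> A \<Longrightarrow> \<gamma> e = 0 \<Longrightarrow> c e = \<infinity>" by (simp add: c_def)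
    show "\<And>e. e \<in> A \<Longrightarrow> \<gamma> e \<noteq> 0 \<Longrightarrow> c e \<noteq> \<infinity>" by (simp add: c_def)
    have "(\<Sum>e\<in>A. ereal (\<gamma> e) * c e * ereal (arc_flow Pa x e)) = (\<Sum>e\<in>A. ereal (k * (\<gamma> e * f e)))"
      by (intro sum.cong refl) (auto simp: c_def f_def)
    also have "\<dots> = ereal (k * W)" by (simp add: sum_ereal W_def sum_distrib_left)
    also have "\<dots> \<le> ereal BF" using kW by simp
    finally show "(\<Sum>e\<in>A. ereal (\<gamma> e) * c e * ereal (arc_flow Pa x e)) \<le> ereal BF" .
  qed
  have lower: "lp_design_obj Pa \<gamma> BF BI x \<le> val Pa x z" if zf: "feasible_interdiction A Pa BI c z" for z
  proof -
    have zn: "\<forall>e\<in>A. \<forall>P\<in>Pa. 0 \<le> z e P" and zinf: "\<forall>e\<in>A. \<forall>P\<in>Pa. \<gamma> e = 0 \<longrightarrow> z e P = 0"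
      and zb: "(\<Sum>e\<in>A. c e * ereal (\<Sum>P\<in>{P\<in>Pa. e \<in> set P}. z e P)) \<le> ereal BI"
      using zf by (auto simp: feasible_interdiction_def c_def)
    have vge: "(\<Sum>P\<in>Pa. x P - (\<Sum>e\<in>set P. z e P)) \<le> val Pa x z"
      unfolding val_def by (intro sum_mono) simp
    show ?thesis
    proof (cases "W = 0")
      case False
      hence Wp: "W > 0" using Wnn by simp
      have kk: "k = BF / W" using False by (simp add: k_def)
      define Zt where "Zt = (\<Sum>e\<in>A. \<Sum>P\<in>{P\<in>Pa. e \<in> set P}. z e P)"
      have "(\<Sum>e\<in>A. c e * ereal (\<Sum>P\<in>{P\<in>Pa. e \<in> set P}. z e P)) = (\<Sum>e\<in>A. ereal (k * (\<Sum>P\<in>{P\<in>Pa. e \<in> set P}. z e P)))"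
      proof (intro sum.cong refl)
        fix e assume e: "e \<in> A"
        show "c e * ereal (\<Sum>P\<in>{P\<in>Pa. e \<in> set P}. z e P) = ereal (k * (\<Sum>P\<in>{P\<in>Pa. e \<in> set P}. z e P))"
        proof (cases "\<gamma> e = 0")
          case True
          hence "(\<Sum>P\<in>{P\<in>Pa. e \<in> set P}. z e P) = 0" using zinf e by (intro sum.neutral) auto
          thus ?thesis by (simp add: zero_ereal_def[symmetric])
        qed (simp add: c_def)
      qed
      also have "\<dots> = ereal (k * Zt)" by (simp add: sum_ereal Zt_def sum_distrib_left)
      finally have "k * Zt \<le> BI" using zb by simp
      hence "BF / W * Zt \<le> BI" by (simp add: kk)
      hence "BF * Zt \<le> BI * W" using Wp by (simp add: field_simps)
      hence Zt: "Zt \<le> BI / BF * W" using BF by (simp add: field_simps)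
      have "(\<Sum>P\<in>Pa. x P - (\<Sum>e\<in>set P. z e P)) = (\<Sum>P\<in>Pa. x P) - Zt"
        unfolding Zt_def by (simp add: sum_subtractf swap_sum[OF finA finP sub])
      thus ?thesis using vge Zt objx by linarith
    next
      case True
      have gf0: "\<gamma> e * f e = 0" if "e \<in> A" for e
      proof -
        have nn: "\<forall>e\<in>A. 0 \<le> \<gamma> e * f e" using gam fnn by simp
        have "(\<Sum>e\<in>A. \<gamma> e * f e) = 0" using True W_def by metis
        moreover have "(\<Sum>e\<in>A. \<gamma> e * f e) = 0 \<longleftrightarrow> (\<forall>e\<in>A. \<gamma> e * f e = 0)"
          by (rule sum_nonneg_eq_0_iff[OF finA]) (use nn in simp)
        ultimately have "\<forall>e\<in>A. \<gamma> e * f e = 0" by simp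
        thus ?thesis using that by blast
      qed
      have "(\<Sum>P\<in>Pa. x P) \<le> val Pa x z"
        unfolding val_def
      proof (intro sum_mono)
        fix P assume P: "P \<in> Pa"
        show "x P \<le> max 0 (x P - (\<Sum>e\<in>set P. z e P))"
        proof (cases "x P > 0")
          case True
          have "(\<Sum>e\<in>set P. z e P) = 0"
          proof (intro sum.neutral ballI)
            fix e assume e: "e \<in> set P"
            have eA: "e \<in> A" using sub P e by auto
            have "x P \<le> f e" unfolding f_def arc_flow_def
              using P e xnn finP by (intro member_le_sum) auto
            hence "\<gamma> e = 0" using gf0[OF eA] True by auto
            thus "z e P = 0" using zinf eA P by auto
          qed
          thus ?thesis by simp
        next
          case False
          hence "x P = 0" using xnn P by force
          thus ?thesis by simp
        qed
      qed
      thus ?thesis using objx True by simp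
    qed
  qed
  have zne: "{z. feasible_interdiction A Pa BI c z} \<noteq> {}"
  proof -
    have "feasible_interdiction A Pa BI c (\<lambda>e P. 0)"
      using BI by (simp add: feasible_interdiction_def zero_ereal_def[symmetric])
    thus ?thesis by blast
  qed
  have dvx: "lp_design_obj Pa \<gamma> BF BI x \<le> design_value A Pa BI x c"
    unfolding design_value_def by (rule cINF_greatest[OF zne]) (simp add: lower)
  have "design_optimal A Pa u \<gamma> BF BI x c"
    unfolding design_optimal_def
  proof (intro conjI allI impI)
    show "feasible_design A Pa u \<gamma> BF x c" by (rule fdx)
    fix x' c' assume "feasible_design A Pa u \<gamma> BF x' c'"
    then obtain x'' where f1: "feasible_flow A Pa u x''" and
      f2: "design_value A Pa BI x' c' \<le> lp_design_obj Pa \<gamma> BF BI x''"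
      using upper[OF finA finP sub gam BF BI] by blast
    show "design_value A Pa BI x' c' \<le> design_value A Pa BI x c"
      using xopt[OF f1] dvx f2 by linarith
  qed
  thus ?thesis unfolding Pa_def by blast
qed

end
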